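(* Let $\mu>0$, $\sigma\ge 0$ and $r=\sigma/\mu$. Then the deterministic robust approximation ratio for selling a single item satisfies \[\mathrm{DAPX}(\mu,\sigma)=\inf_{p\ge 0}\ \sup_{F\in\mathbb{F}_{\mu,\sigma}}\frac{\mathrm{OPT}(F)}{\mathrm{REV}(p;F)}=\rho_D(r),\] where $\rho_D(r)$ is the unique positive solution $\rho$ of $\frac{(\rho-1)^3}{(2\rho-1)^2}=r^2$. Moreover, this value is achieved by the take-it-or-leave-it price $p=\frac{\rho_D(r)}{2\rho_D(r)-1}\cdot\mu$, i.e. $\sup_{F\in\mathbb{F}_{\mu,\sigma}}\mathrm{OPT}(F)/\mathrm{REV}(p;F)=\rho_D(r)$ for this $p$.
   Context: A nonnegative real random variable is $(\mu,\sigma)$-distributed if its expectation is $\mu$ and its standard deviation is at most $\sigma$; $\mathbb{F}_{\mu,\sigma}$ denotes the class of distributions of such random variables. There is one item and one buyer whose value $X$ is drawn from $F$. For a price $p\ge 0$, $\mathrm{REV}(p;F)=p\cdot\Pr[X\ge p]$ is the revenue of posting the take-it-or-leave-it price $p$, and $\mathrm{OPT}(F)=\sup_{p\ge0}\mathrm{REV}(p;F)$ is the optimal revenue over all truthful (possibly randomized) mechanisms. A ratio with zero denominator is interpreted as $+\infty$. *)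

theory Defs
  imports "HOL-Probability.Probability"
begin

definition mv_dists :: "real \<Rightarrow> real \<Rightarrow> real measure set" where
  "mv_dists mu sd = {M. prob_space M \<and> sets M = sets borel \<and>
      (AE x in M. 0 \<le> x) \<and>
      integrable M (\<lambda>x. x) \<and> integrable M (\<lambda>x. x ^ 2) \<and>
      prob_space.expectation M (\<lambda>x. x) = mu \<and>
      prob_space.variance M (\<lambda>x. x) \<le> sd ^ 2}"

definition REV :: "real \<Rightarrow> real measure \<Rightarrow> real" where
  "REV p M = p * measure M {p..}"

definition OPT :: "real measure \<Rightarrow> ereal" where
  "OPT M = (SUP p\<in>{0..}. ereal (REV p M))"

definition ratio :: "ereal \<Rightarrow> real \<Rightarrow> ereal" where
  "ratio a b = (if b = 0 then \<infinity> else a / ereal b)"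

definition DAPX :: "real \<Rightarrow> real \<Rightarrow> ereal" where
  "DAPX mu sd = (INF p\<in>{0..}. SUP M\<in>mv_dists mu sd. ratio (OPT M) (REV p M))"

definition rho_eq :: "real \<Rightarrow> real \<Rightarrow> bool" where
  "rho_eq r \<rho> \<longleftrightarrow> \<rho> > 0 \<and> 2 * \<rho> - 1 \<noteq> 0 \<and> (\<rho> - 1) ^ 3 / (2 * \<rho> - 1) ^ 2 = r ^ 2"

definition rho_D :: "real \<Rightarrow> real" where
  "rho_D r = (THE \<rho>. rho_eq r \<rho>)"

end

theory Submission
  imports Defs
begin


lemma mv_facts:
  assumes "M \<in> mv_dists mu sd"
  shows "prob_space M" "sets M = sets borel" "integrable M (\<lambda>x. x)" "integrable M (\<lambda>x. x^2)"
    "integral\<^sup>L M (\<lambda>x. x) = mu" "integral\<^sup>L M (\<lambda>x. (x - mu)^2) \<le> sd^2"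
  using assms unfolding mv_dists_def by auto

lemma quad_bound:
  assumes "M \<in> mv_dists mu sd"
  shows "integrable M (\<lambda>x. (x - c)^2)" "integral\<^sup>L M (\<lambda>x. (x - c)^2) \<le> sd^2 + (mu - c)^2"
proof -
  note f = mv_facts[OF assms]
  interpret prob_space M by (rule f(1))
  have eq: "\<And>x. (x - c)^2 = (x - mu)^2 + (2*(mu - c)) * x + (c^2 - mu^2)"
    by (simp add: power2_eq_square algebra_simps)
  have eq2: "\<And>x. (x - mu)^2 = x^2 + (-2*mu) * x + mu^2"
    by (simp add: power2_eq_square algebra_simps)
  have i1: "integrable M (\<lambda>x. (x - mu)^2)" unfolding eq2 using f(3,4) by auto
  show "integrable M (\<lambda>x. (x - c)^2)" unfolding eq using f(3) i1 by auto
  have "integral\<^sup>L M (\<lambda>x. (x - c)^2) = integral\<^sup>L M (\<lambda>x. (x - mu)^2) + (2*(mu - c)) * mu + (c^2 - mu^2)"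
    unfolding eq using f(3,5) i1 by (simp add: prob_space)
  also have "\<dots> \<le> sd^2 + (mu - c)^2" using f(6) by (simp add: power2_eq_square algebra_simps)
  finally show "integral\<^sup>L M (\<lambda>x. (x - c)^2) \<le> sd^2 + (mu - c)^2" .
qed

lemma ind_facts:
  assumes "M \<in> mv_dists mu sd"
  shows "integrable M (indicator {t..} :: real \<Rightarrow> real)" "integral\<^sup>L M (indicator {t..}) = measure M {t..}"
proof -
  note f = mv_facts[OF assms]
  interpret prob_space M by (rule f(1))
  have s: "{t..} \<in> sets M" using f(2) by simp
  show "integrable M (indicator {t..} :: real \<Rightarrow> real)" using s by (intro integrable_real_indicator) (auto simp: less_top[symmetric])
  show "integral\<^sup>L M (indicator {t..}) = measure M {t..}" using s f(2)
    by (simp add: sets.Int_space_eq2)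
qed



lemma alg1:
  fixes mu rho D :: real
  assumes "mu > 0" "rho > 1" and DD: "D = 2*rho - 1"
  shows "mu^2*(rho-1)^3/D^2 + (mu - rho*(rho/D*mu))^2 = (1 - 1/rho) * (rho*(rho/D*mu) - rho/D*mu)^2"
proof -
  have "D > 0" using assms by simp
  then have e1: "(mu - rho*(rho/D*mu))^2 = mu^2*(D - rho*rho)^2/D^2"
    by (simp add: field_simps power2_eq_square)
  have e2: "(1 - 1/rho) * (rho*(rho/D*mu) - rho/D*mu)^2 = mu^2*((rho-1)^3*rho)/D^2"
    using \<open>D > 0\<close> assms(2) by (simp add: field_simps power2_eq_square power3_eq_cube)
  have e3: "(rho-1)^3*rho = (rho-1)^3 + (D - rho*rho)^2"
    unfolding DD by (simp add: power2_eq_square power3_eq_cube algebra_simps)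
  show ?thesis unfolding e1 e2 e3 by (simp add: add_divide_distrib distrib_left)
qed

lemma alg2:
  fixes mu rho D :: real
  assumes "mu > 0" "rho > 1" and DD: "D = 2*rho - 1"
  shows "mu^2*(rho-1)^3/D^2 + (mu - (rho/D*mu + rho*(rho/D*mu))/2)^2 = ((rho*(rho/D*mu) - rho/D*mu)/2)^2"
proof -
  have "D > 0" using assms by simp
  then have e1: "(mu - (rho/D*mu + rho*(rho/D*mu))/2)^2 = mu^2*(2*D - rho - rho*rho)^2/(4*D^2)"
    by (simp add: field_simps power2_eq_square)
  have e2: "((rho*(rho/D*mu) - rho/D*mu)/2)^2 = mu^2*(rho*rho-rho)^2/(4*D^2)"
    using \<open>D > 0\<close> by (simp add: field_simps power2_eq_square)
  have e0: "mu^2*(rho-1)^3/D^2 = mu^2*(4*(rho-1)^3)/(4*D^2)" by simp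
  have e3: "(rho*rho-rho)^2 = 4*(rho-1)^3 + (2*D - rho - rho*rho)^2"
    unfolding DD by (simp add: power2_eq_square power3_eq_cube algebra_simps)
  show ?thesis unfolding e0 e1 e2 e3 by (simp add: add_divide_distrib distrib_left)
qed



lemma upper_abstract:
  assumes M: "M \<in> mv_dists mu sd" and p: "p > 0" and rho: "rho > 1" and hdef: "h = rho * p"
    and c1: "sd^2 + (mu - h)^2 = (1 - 1/rho) * (h - p)^2"
    and c2: "sd^2 + (mu - (p + h)/2)^2 = ((h - p)/2)^2"
  shows "measure M {p..} \<ge> 1/rho" "t \<ge> 0 \<Longrightarrow> REV t M \<le> rho * REV p M"
proof -
  note f = mv_facts[OF M]
  interpret prob_space M by (rule f(1))
  have hp: "h > p" using p rho hdef by simp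
  have hp2: "(h - p)^2 > 0" using hp by simp
  note Q = quad_bound[OF M]
  note I = ind_facts[OF M]
  have pw1: "1 - (x - h)^2/(h - p)^2 \<le> indicator {p..} x" for x :: real
  proof (cases "x \<ge> p")
    case True then show ?thesis using hp2 by simp
  next
    case False
    have "(h - p)^2 \<le> (h - x)^2" by (rule power_mono) (use False hp in auto)
    then have "(h - p)^2 \<le> (x - h)^2" by (simp add: power2_commute)
    then show ?thesis using False hp2 by simp
  qed
  have "integral\<^sup>L M (\<lambda>x. 1 - (x - h)^2/(h - p)^2) \<le> integral\<^sup>L M (indicator {p..})"
    by (rule integral_mono) (use Q(1)[of h] I(1)[of p] pw1 in auto)
  moreover have "integral\<^sup>L M (\<lambda>x. 1 - (x - h)^2/(h - p)^2) = 1 - integral\<^sup>L M (\<lambda>x. (x - h)^2)/(h - p)^2"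
    using Q(1)[of h] by (simp add: prob_space)
  moreover have "integral\<^sup>L M (\<lambda>x. (x - h)^2)/(h - p)^2 \<le> (sd^2 + (mu - h)^2)/(h - p)^2"
    using Q(2)[of h] hp2 by (simp add: divide_right_mono)
  moreover have "(sd^2 + (mu - h)^2)/(h - p)^2 = 1 - 1/rho" using c1 hp2 by simp
  ultimately show q: "measure M {p..} \<ge> 1/rho" using I(2)[of p] by linarith
  assume t: "t \<ge> 0"
  have q0: "rho * measure M {p..} \<ge> 1" using q rho by (simp add: field_simps)
  show "REV t M \<le> rho * REV p M"
  proof (cases "t < p")
    case True
    have "REV t M \<le> t" unfolding REV_def using t by (simp add: mult_left_le)
    also have "\<dots> \<le> p * 1" using True by simp
    also have "\<dots> \<le> p * (rho * measure M {p..})" using q0 p by (intro mult_left_mono) auto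
    finally show ?thesis unfolding REV_def by (simp add: algebra_simps)
  next
    case False
    have sle: "measure M {t..} \<le> measure M {p..}"
      using False f(2) by (intro finite_measure_mono) auto
    show ?thesis
    proof (cases "t \<le> h")
      case True
      have "REV t M \<le> t * measure M {p..}" unfolding REV_def using sle t by (simp add: mult_left_mono)
      also have "\<dots> \<le> h * measure M {p..}" using True by (simp add: mult_right_mono)
      finally show ?thesis unfolding REV_def hdef by simp
    next
      case False
      define m0 where "m0 = (p + h)/2"
      define g where "g = (h - p)/2"
      have g0: "g > 0" using hp g_def by simp
      have hm: "h - m0 = g" "m0 - p = g" unfolding m0_def g_def by (simp_all add: field_simps)
      have key: "h * (t - m0)^2 \<ge> t * g^2"
      proof -
        have "h * (t - m0)^2 - t * g^2 = (t - h) * (h * (t - h + 2*g) - g^2)"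
          using hm by (simp add: power2_eq_square algebra_simps)
        moreover have "h * (t - h + 2*g) - g^2 \<ge> 0"
        proof -
          have "h * (t - h + 2*g) \<ge> h * (2*g)" using False hp p by (intro mult_left_mono) auto
          moreover have "h * (2*g) \<ge> g * g" using mult_right_mono[of g "2*h" g] hm g0 p hp by (simp add: algebra_simps)
          ultimately show ?thesis by (simp add: power2_eq_square)
        qed
        moreover have "t - h \<ge> 0" using False by simp
        ultimately show ?thesis by (metis diff_ge_0_iff_ge zero_le_mult_iff)
      qed
      have pw: "t * indicator {t..} x - h * indicator {p..} x \<le> h * (x - m0)^2 / g^2 - h" for x :: real
      proof -
        consider "x < p" | "p \<le> x" "x < t" | "t \<le> x" by linarith
        then show ?thesis
        proof cases
          case 1
          have "g^2 \<le> (m0 - x)^2" by (rule power_mono) (use 1 hm g0 in auto)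
          then have "g^2 \<le> (x - m0)^2" by (simp add: power2_commute)
          then have "h * g^2 / g^2 \<le> h * (x - m0)^2 / g^2" using hp p g0
            by (intro divide_right_mono mult_left_mono) auto
          then show ?thesis using 1 \<open>\<not> t < p\<close> g0 by (simp add: indicator_def)
        next
          case 2
          have "0 \<le> h * (x - m0)^2 / g^2" using hp p by simp
          then show ?thesis using 2 by (simp add: indicator_def)
        next
          case 3
          have "(t - m0)^2 \<le> (x - m0)^2" using 3 False hm g0 by (intro power_mono) auto
          then have "h * (t - m0)^2 / g^2 \<le> h * (x - m0)^2 / g^2" using hp p g0
            by (intro divide_right_mono mult_left_mono) auto
          moreover have "t \<le> h * (t - m0)^2 / g^2" using key g0 by (simp add: field_simps)
          ultimately show ?thesis using 3 \<open>\<not> t < p\<close> by (simp add: indicator_def)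
        qed
      qed
      have "integral\<^sup>L M (\<lambda>x. t * indicator {t..} x - h * indicator {p..} x) \<le> integral\<^sup>L M (\<lambda>x. h * (x - m0)^2 / g^2 - h)"
        by (rule integral_mono) (use Q(1)[of m0] I(1)[of p] I(1)[of t] pw in auto)
      moreover have "integral\<^sup>L M (\<lambda>x. t * indicator {t..} x - h * indicator {p..} x) = t * measure M {t..} - h * measure M {p..}"
        using I(1)[of p] I(1)[of t] I(2)[of p] I(2)[of t] by simp
      moreover have "integral\<^sup>L M (\<lambda>x. h * (x - m0)^2 / g^2 - h) = h * integral\<^sup>L M (\<lambda>x. (x - m0)^2) / g^2 - h"
        using Q(1)[of m0] by (simp add: prob_space)
      moreover have "h * integral\<^sup>L M (\<lambda>x. (x - m0)^2) / g^2 \<le> h * (sd^2 + (mu - m0)^2) / g^2"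
        using Q(2)[of m0] hp p g0 by (intro divide_right_mono mult_left_mono) auto
      moreover have "h * (sd^2 + (mu - m0)^2) / g^2 = h" using c2 g0 unfolding m0_def g_def by simp
      ultimately have "t * measure M {t..} \<le> h * measure M {p..}" by linarith
      then show ?thesis unfolding REV_def hdef by simp
    qed
  qed
qed



lemma zero_sd:
  assumes M: "M \<in> mv_dists mu 0" and t: "t \<ge> 0" and mu: "mu > 0"
  shows "REV t M \<le> REV mu M" "REV mu M = mu"
proof -
  note f = mv_facts[OF M]
  interpret prob_space M by (rule f(1))
  note Q = quad_bound[OF M, of mu]
  have "integral\<^sup>L M (\<lambda>x. (x - mu)^2) = 0"
    using Q(2) integral_nonneg_AE[of "\<lambda>x. (x - mu)^2" M] by (simp add: antisym)
  then have ae: "AE x in M. (x - mu)^2 = 0"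
    using integral_nonneg_eq_0_iff_AE[OF Q(1)] by simp
  have meas: "measure M {s..} = (if s \<le> mu then 1 else 0)" for s
  proof -
    have "measure M {s..} = measure M (if s \<le> mu then space M else {})"
    proof (rule measure_eq_AE)
      have sp: "space M = UNIV" using sets_eq_imp_space_eq[OF f(2)] by simp
      have ae2: "AE x in M. x = mu" using ae by eventually_elim simp
      show "AE x in M. (x \<in> {s..}) = (x \<in> (if s \<le> mu then space M else {}))"
        using ae2 by eventually_elim (auto simp: sp)
      show "{s..} \<in> sets M" using f(2) by simp
      show "(if s \<le> mu then space M else {}) \<in> sets M" by simp
    qed
    then show ?thesis by (simp add: prob_space)
  qed
  show "REV mu M = mu" unfolding REV_def meas by simp
  show "REV t M \<le> REV mu M" unfolding REV_def meas using t mu by simp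
qed

definition twopt :: "real \<Rightarrow> real \<Rightarrow> real \<Rightarrow> real measure" where
  "twopt q a b = distr (measure_pmf (bernoulli_pmf q)) borel (\<lambda>x. if x then b else a)"

lemma twopt_meas: "(\<lambda>x. if x then b else a) \<in> measurable (measure_pmf (bernoulli_pmf q)) (borel :: real measure)"
  by simp

lemma twopt_integral:
  assumes "0 \<le> q" "q \<le> 1" and [measurable]: "(f :: real \<Rightarrow> real) \<in> borel_measurable borel"
  shows "integral\<^sup>L (twopt q a b) f = q * f b + (1 - q) * f a"
  unfolding twopt_def using assms by (subst integral_distr) (auto intro: twopt_meas)

lemma twopt_integrable:
  assumes "0 \<le> q" "q \<le> 1" and [measurable]: "(f :: real \<Rightarrow> real) \<in> borel_measurable borel"
  shows "integrable (twopt q a b) f"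
  unfolding twopt_def
  by (subst integrable_distr_eq) (auto intro: twopt_meas integrable_measure_pmf_finite)

lemma twopt_prob:
  assumes "0 \<le> q" "q \<le> 1"
  shows "prob_space (twopt q a b)" "sets (twopt q a b) = sets borel"
  unfolding twopt_def by (auto intro!: prob_space.prob_space_distr prob_space_measure_pmf twopt_meas)

lemma twopt_measure:
  assumes "0 \<le> q" "q \<le> 1"
  shows "measure (twopt q a b) {t..} = q * indicator {t..} b + (1 - q) * indicator {t..} a"
proof -
  have "measure (twopt q a b) {t..} = integral\<^sup>L (twopt q a b) (indicator {t..})"
    using twopt_prob(2)[OF assms] by (simp add: twopt_def)
  also have "\<dots> = q * indicator {t..} b + (1 - q) * indicator {t..} a"
    by (rule twopt_integral[OF assms]) simp
  finally show ?thesis .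
qed

lemma twopt_mv:
  assumes "0 \<le> q" "q \<le> 1" "0 \<le> a" "0 \<le> b" "q * b + (1 - q) * a = mu"
    "q * (b - mu)^2 + (1 - q) * (a - mu)^2 \<le> sd^2"
  shows "twopt q a b \<in> mv_dists mu sd"
proof -
  note P = twopt_prob[OF assms(1,2), of a b]
  have ae: "AE x in twopt q a b. 0 \<le> x"
    unfolding twopt_def using assms(3,4)
    by (subst AE_distr_iff) (auto intro: twopt_meas)
  show ?thesis unfolding mv_dists_def
  proof (intro CollectI conjI)
    have i1: "integral\<^sup>L (twopt q a b) (\<lambda>x. x) = mu"
      using twopt_integral[OF assms(1,2), of "\<lambda>x. x"] assms(5) by simp
    show "integral\<^sup>L (twopt q a b) (\<lambda>x. x) = mu" by (rule i1)
    have "integral\<^sup>L (twopt q a b) (\<lambda>x. (x - mu)^2) \<le> sd^2"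
      using twopt_integral[OF assms(1,2), of "\<lambda>x. (x - mu)^2"] assms(6) by simp
    then show "integral\<^sup>L (twopt q a b) (\<lambda>x. (x - integral\<^sup>L (twopt q a b) (\<lambda>x. x))^2) \<le> sd^2"
      unfolding i1 .
    show "integrable (twopt q a b) (\<lambda>x. x)" "integrable (twopt q a b) (\<lambda>x. x^2)"
      by (rule twopt_integrable[OF assms(1,2)]; simp)+
  qed (use P ae in auto)
qed



lemma REV_nonneg: "p \<ge> 0 \<Longrightarrow> REV p M \<ge> 0"
  unfolding REV_def by simp

lemma ratio_lb:
  assumes "REV p M > 0" "t \<ge> 0"
  shows "ereal (REV t M / REV p M) \<le> ratio (OPT M) (REV p M)"
proof -
  have "ereal (REV t M) \<le> OPT M" unfolding OPT_def using assms(2) by (intro SUP_upper) auto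
  then have "ereal (REV t M) / ereal (REV p M) \<le> OPT M / ereal (REV p M)"
    using assms(1) by (intro ereal_divide_right_mono) auto
  then show ?thesis unfolding ratio_def using assms(1) by simp
qed

lemma ratio_ge1:
  assumes "p \<ge> 0"
  shows "1 \<le> ratio (OPT M) (REV p M)"
proof (cases "REV p M = 0")
  case True then show ?thesis unfolding ratio_def by simp
next
  case False
  then have "REV p M > 0" using REV_nonneg[OF assms, of M] by simp
  from ratio_lb[OF this assms] show ?thesis using \<open>REV p M > 0\<close> by (simp add: one_ereal_def)
qed

lemma twopt_ratio:
  assumes q: "0 < q" "q \<le> 1" and a: "0 \<le> a" "a < p" "p \<le> b"
  shows "ereal (a / (p * q)) \<le> ratio (OPT (twopt q a b)) (REV p (twopt q a b))"
        "ereal (b / p) \<le> ratio (OPT (twopt q a b)) (REV p (twopt q a b))"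
proof -
  have p0: "p > 0" using a by simp
  have Rp: "REV p (twopt q a b) = p * q"
    unfolding REV_def using q a by (simp add: twopt_measure indicator_def)
  have Ra: "REV a (twopt q a b) = a"
    unfolding REV_def using q a by (simp add: twopt_measure indicator_def)
  have Rb: "REV b (twopt q a b) = b * q"
    unfolding REV_def using q a by (simp add: twopt_measure indicator_def)
  have pos: "REV p (twopt q a b) > 0" unfolding Rp using p0 q by simp
  show "ereal (a / (p * q)) \<le> ratio (OPT (twopt q a b)) (REV p (twopt q a b))"
    using ratio_lb[OF pos a(1)] unfolding Ra Rp .
  show "ereal (b / p) \<le> ratio (OPT (twopt q a b)) (REV p (twopt q a b))"
    using ratio_lb[OF pos, of b] a q unfolding Rb Rp by simp
qed



lemma fam:
  assumes mu: "mu > 0" and sd: "sd > 0" and d: "0 < d" "d < mu" and p: "mu - d < p" "p \<le> mu + sd^2/d"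
  shows "twopt (d^2/(sd^2+d^2)) (mu - d) (mu + sd^2/d) \<in> mv_dists mu sd"
    "ereal ((mu - d)*(sd^2+d^2)/(p*d^2)) \<le> ratio (OPT (twopt (d^2/(sd^2+d^2)) (mu - d) (mu + sd^2/d))) (REV p (twopt (d^2/(sd^2+d^2)) (mu - d) (mu + sd^2/d)))"
    "ereal ((mu + sd^2/d)/p) \<le> ratio (OPT (twopt (d^2/(sd^2+d^2)) (mu - d) (mu + sd^2/d))) (REV p (twopt (d^2/(sd^2+d^2)) (mu - d) (mu + sd^2/d)))"
proof -
  define q where "q = d^2/(sd^2+d^2)"
  have s0: "sd^2 + d^2 > 0" using sd by (intro add_pos_nonneg) auto
  have q0: "0 < q" "q \<le> 1" unfolding q_def using d s0 by auto
  have b0: "0 \<le> mu + sd^2/d" using mu d by simp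
  have omq: "1 - q = sd^2/(sd^2+d^2)" unfolding q_def using s0 d by (simp add: field_simps add_divide_distrib[symmetric])
  have k: "q*(sd^2/d) = (1-q)*d" unfolding omq q_def using d by (simp add: power2_eq_square field_simps)
  have "q * (mu + sd^2/d) + (1 - q) * (mu - d) = mu + (q*(sd^2/d) - (1-q)*d)"
    by (simp add: algebra_simps)
  then have mean: "q * (mu + sd^2/d) + (1 - q) * (mu - d) = mu" using k by simp
  have "q * ((mu + sd^2/d) - mu)^2 + (1 - q) * ((mu - d) - mu)^2 = (d^2 * (sd^2/d)^2 + sd^2 * d^2)/(sd^2+d^2)"
    unfolding omq unfolding q_def by (simp add: add_divide_distrib)
  also have "d^2 * (sd^2/d)^2 + sd^2 * d^2 = sd^2 * (sd^2+d^2)" using d by (simp add: power2_eq_square field_simps)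
  finally have var: "q * ((mu + sd^2/d) - mu)^2 + (1 - q) * ((mu - d) - mu)^2 = sd^2" using s0 by simp
  show "twopt (d^2/(sd^2+d^2)) (mu - d) (mu + sd^2/d) \<in> mv_dists mu sd"
    using twopt_mv[of q "mu - d" "mu + sd^2/d" mu sd] q0 d b0 mean var unfolding q_def by simp
  note R = twopt_ratio[OF q0, of "mu - d" p "mu + sd^2/d"]
  have eq: "(mu - d) / (p * q) = (mu - d)*(sd^2+d^2)/(p*d^2)"
    unfolding q_def using d s0 by (simp add: field_simps)
  show "ereal ((mu - d)*(sd^2+d^2)/(p*d^2)) \<le> ratio (OPT (twopt (d^2/(sd^2+d^2)) (mu - d) (mu + sd^2/d))) (REV p (twopt (d^2/(sd^2+d^2)) (mu - d) (mu + sd^2/d)))"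
    using R(1) d p unfolding eq q_def by simp
  show "ereal ((mu + sd^2/d)/p) \<le> ratio (OPT (twopt (d^2/(sd^2+d^2)) (mu - d) (mu + sd^2/d))) (REV p (twopt (d^2/(sd^2+d^2)) (mu - d) (mu + sd^2/d)))"
    using R(2) d p unfolding q_def by simp
qed



lemma ineq1:
  fixes mu rho D sd p :: real
  assumes mu: "mu > 0" and rho: "rho > 1" and DD: "D = 2*rho - 1" and sd: "sd^2 = mu^2*(rho-1)^3/D^2"
    and p: "rho/D*mu \<le> p" "p < mu"
  shows "rho \<le> 1 + sd^2/(mu - p)^2"
proof -
  have D0: "D > 0" using rho DD by simp
  have "mu - p \<le> mu - rho/D*mu" using p by simp
  also have "mu - rho/D*mu = mu*(D-rho)/D" using D0 by (simp add: field_simps)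
  also have "D - rho = rho - 1" using DD by simp
  finally have "(mu - p)^2 \<le> (mu*(rho-1)/D)^2" using p by (intro power_mono) auto
  moreover have "0 < (mu*(rho-1)/D)^2 * (mu - p)^2" using p mu rho D0 by simp
  ultimately have "sd^2/(mu*(rho-1)/D)^2 \<le> sd^2/(mu - p)^2" using p
    by (intro divide_left_mono) auto
  moreover have "sd^2/(mu*(rho-1)/D)^2 = rho - 1"
  proof -
    have "sd^2 = (mu*(rho-1)/D)^2 * (rho-1)" unfolding sd
      by (simp add: power_divide power_mult_distrib power2_eq_square power3_eq_cube)
    moreover have "(mu*(rho-1)/D)^2 > 0" using D0 mu rho by simp
    ultimately show ?thesis by simp
  qed
  ultimately show ?thesis by simp
qed

lemma ineq2:
  fixes mu rho D sd p :: real
  assumes mu: "mu > 0" and rho: "rho > 1" and DD: "D = 2*rho - 1" and sd: "sd^2 = mu^2*(rho-1)^3/D^2"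
    and p: "0 < p" "p \<le> rho/D*mu"
  shows "rho \<le> (mu + sd^2/(mu - p))/p"
proof -
  have D0: "D > 0" using rho DD by simp
  define P1 where "P1 = rho/D*mu"
  define P2 where "P2 = mu*(rho+1)/rho - P1"
  have P1mu: "P1 < mu" unfolding P1_def using D0 DD rho mu by (simp add: field_simps)
  have pm: "p < mu" using p P1mu P1_def by simp
  have e1: "rho*(P1*P2) = mu^2*(rho*(rho+1)*D - rho^3)/D^2"
    unfolding P1_def P2_def using D0 rho by (simp add: field_simps power2_eq_square power3_eq_cube)
  have e2: "mu^2+sd^2 = mu^2*(D^2+(rho-1)^3)/D^2" unfolding sd using D0 by (simp add: field_simps)
  have e3: "rho*(rho+1)*D - rho^3 = D^2+(rho-1)^3" unfolding DD
    by (simp add: power2_eq_square power3_eq_cube algebra_simps)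
  have key: "rho*(P1*P2) = mu^2+sd^2" unfolding e1 e2 e3 ..
  have "P2 - P1 = mu*((rho+1)*D - 2*rho*rho)/(rho*D)" unfolding P2_def P1_def using rho D0
    by (simp add: field_simps)
  also have "(rho+1)*D - 2*rho*rho = rho - 1" unfolding DD by (simp add: algebra_simps)
  finally have P2P1: "P2 - P1 = mu*(rho-1)/(rho*D)" .
  have "mu*(rho-1)/(rho*D) \<ge> 0" using rho D0 mu by simp
  then have "P2 \<ge> P1" using P2P1 by simp
  have sumP: "rho*(P1+P2) = mu*(rho+1)" unfolding P2_def using rho by (simp add: field_simps)
  have "mu*(mu-p) + sd^2 - rho*p*(mu-p) = rho*p^2 - (rho*(P1+P2))*p + rho*(P1*P2)"
    unfolding key sumP by (simp add: algebra_simps power2_eq_square)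
  also have "\<dots> = rho*((P1-p)*(P2-p))" unfolding sumP[symmetric] by (simp add: power2_eq_square algebra_simps)
  also have "\<dots> \<ge> 0" using p \<open>P2 \<ge> P1\<close> rho unfolding P1_def[symmetric] by simp
  finally have "rho*p*(mu-p) \<le> mu*(mu-p) + sd^2" by simp
  then show ?thesis using p pm by (simp add: field_simps)
qed



lemma near:
  fixes F :: "real \<Rightarrow> real"
  assumes "d0 < mu" "(F \<longlongrightarrow> L) (at_right d0)" "y < L"
  shows "\<exists>d. d0 < d \<and> d < mu \<and> y < F d"
proof -
  have "eventually (\<lambda>d. y < F d) (at_right d0)" using order_tendstoD(1)[OF assms(2,3)] .
  moreover have "eventually (\<lambda>d. d < mu) (at_right d0)"
    using order_tendstoD(2)[OF tendsto_ident_at assms(1)] .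
  moreover have "eventually (\<lambda>d. d0 < d) (at_right d0)" by (rule eventually_at_right_less)
  ultimately have "eventually (\<lambda>d. d0 < d \<and> d < mu \<and> y < F d) (at_right d0)"
    by eventually_elim auto
  then show ?thesis using eventually_happens'[of "at_right d0"] by auto
qed

lemma lower_core:
  fixes mu rho D sd p y :: real
  assumes mu: "mu > 0" and sd0: "sd > 0" and rho: "rho > 1" and DD: "D = 2*rho - 1" and sd: "sd^2 = mu^2*(rho-1)^3/D^2"
    and p: "p > 0" and y: "y < rho"
  shows "\<exists>M\<in>mv_dists mu sd. ereal y \<le> ratio (OPT M) (REV p M)"
proof -
  have D0: "D > 0" using rho DD by simp
  have sdp: "sd^2 > 0" using sd0 by simp
  have P1mu: "rho/D*mu < mu" using D0 DD rho mu by (simp add: field_simps)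
  have lim_case: "\<exists>M\<in>mv_dists mu sd. ereal y \<le> ratio (OPT M) (REV p M)"
    if d: "0 < d" "d < mu" "mu - d < p" "p \<le> mu + sd^2/d" and r: "y < (mu - d)*(sd^2+d^2)/(p*d^2) \<or> y < (mu + sd^2/d)/p" for d
  proof -
    note f = fam[OF mu sd0 d]
    from r show ?thesis
    proof
      assume "y < (mu - d)*(sd^2+d^2)/(p*d^2)"
      then show ?thesis using f(1,2) by (intro bexI[OF _ f(1)]) (meson ereal_less_eq(3) less_imp_le order_trans)
    next
      assume "y < (mu + sd^2/d)/p"
      then show ?thesis using f(1,3) by (intro bexI[OF _ f(1)]) (meson ereal_less_eq(3) less_imp_le order_trans)
    qed
  qed
  consider "mu \<le> p" | "p < mu" "rho/D*mu \<le> p" | "p < rho/D*mu" by linarith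
  then show ?thesis
  proof cases
    case 1
    define K where "K = mu* sd^2/(2*p*(\<bar>y\<bar>+1))"
    have K0: "K > 0" unfolding K_def using mu sdp p by (simp add: add_pos_nonneg)
    define d where "d = min (mu/2) (min (sd^2/p) (sqrt K / 2))"
    have d0: "d > 0" unfolding d_def using mu sdp p K0 by simp
    have dmu: "d \<le> mu/2" "d \<le> sd^2/p" "d \<le> sqrt K / 2" unfolding d_def
      by (rule min.cobounded1, meson min.cobounded1 min.cobounded2 order_trans, meson min.cobounded2 order_trans)
    have pb: "p \<le> mu + sd^2/d"
    proof -
      have "p * d \<le> sd^2" using dmu(2) p by (simp add: field_simps)
      then have "p \<le> sd^2/d" using d0 by (simp add: field_simps)
      then show ?thesis using mu by simp
    qed
    have dK: "d^2 \<le> K/4"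
    proof -
      have "d^2 \<le> (sqrt K / 2)^2" using dmu(3) d0 by (intro power_mono) auto
      also have "\<dots> = K/4" using K0 by (simp add: power_divide)
      finally show ?thesis .
    qed
    have "y < 4*(\<bar>y\<bar>+1)" by simp
    also have "4*(\<bar>y\<bar>+1) = (mu/2)* sd^2/(p*(K/4))" unfolding K_def using mu sdp p
      by (simp add: field_simps)
    also have "\<dots> \<le> (mu/2)* sd^2/(p*d^2)" using dK d0 p mu sdp K0 mult_pos_pos[of "p*K" "p*d^2"]
      by (intro divide_left_mono mult_left_mono) auto
    also have "\<dots> \<le> (mu - d)*(sd^2+d^2)/(p*d^2)" using d0 p dmu mu
      by (intro divide_right_mono mult_mono) auto
    finally show ?thesis using lim_case[of d] d0 dmu mu 1 pb by simp
  next
    case 2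
    define d0 where "d0 = mu - p"
    have d00: "d0 > 0" "d0 < mu" using 2 p unfolding d0_def by auto
    have lim: "((\<lambda>d. (mu - d)*(sd^2+d^2)/(p*d^2)) \<longlongrightarrow> (mu - d0)*(sd^2+d0^2)/(p*d0^2)) (at_right d0)"
      using d00 p by (intro tendsto_intros) auto
    have "(mu - d0)*(sd^2+d0^2)/(p*d0^2) = 1 + sd^2/(mu - p)^2"
      unfolding d0_def using d00 p 2 by (simp add: field_simps d0_def)
    moreover have "rho \<le> 1 + sd^2/(mu - p)^2" by (rule ineq1[OF mu rho DD sd 2(2) 2(1)])
    ultimately obtain d where d: "d0 < d" "d < mu" "y < (mu - d)*(sd^2+d^2)/(p*d^2)"
      using near[OF d00(2) lim] y by force
    have "p \<le> mu + sd^2/d" using 2 d d00 sdp by (smt (verit) divide_nonneg_pos)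
    then show ?thesis using lim_case[of d] d d00 unfolding d0_def by simp
  next
    case 3
    define d0 where "d0 = mu - p"
    have d00: "d0 > 0" "d0 < mu" using 3 P1mu p unfolding d0_def by auto
    have lim: "((\<lambda>d. (mu + sd^2/d)/p) \<longlongrightarrow> (mu + sd^2/d0)/p) (at_right d0)"
      using d00 p by (intro tendsto_intros) auto
    have "rho \<le> (mu + sd^2/d0)/p" unfolding d0_def using ineq2[OF mu rho DD sd p] 3 by simp
    then obtain d where d: "d0 < d" "d < mu" "y < (mu + sd^2/d)/p"
      using near[OF d00(2) lim] y by force
    have "p \<le> mu + sd^2/d" using 3 P1mu d d00 sdp by (smt (verit) divide_nonneg_pos)
    then show ?thesis using lim_case[of d] d d00 unfolding d0_def by simp
  qed
qed



lemma upper_ratio: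
  assumes pos: "REV p M > 0" and le: "\<And>t. t \<ge> 0 \<Longrightarrow> REV t M \<le> c * REV p M"
  shows "ratio (OPT M) (REV p M) \<le> ereal c"
proof -
  have "OPT M \<le> ereal (c * REV p M)" unfolding OPT_def using le by (intro SUP_least) auto
  then have "OPT M / ereal (REV p M) \<le> ereal (c * REV p M) / ereal (REV p M)"
    using pos by (intro ereal_divide_right_mono) auto
  then show ?thesis unfolding ratio_def using pos by simp
qed

lemma rho_ge1: "rho_eq r x \<Longrightarrow> x \<ge> 1"
proof (rule ccontr)
  assume a: "rho_eq r x" "\<not> x \<ge> 1"
  then have "(x - 1)^3 < 0" by simp
  moreover have "(2*x - 1)^2 > 0" using a unfolding rho_eq_def by simp
  ultimately have "(x - 1)^3/(2*x - 1)^2 < 0" by (simp add: divide_neg_pos)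
  then show False using a unfolding rho_eq_def by simp
qed

lemma fr_mono:
  fixes a b :: real
  assumes "1 \<le> a" "a < b"
  shows "(a - 1)^3/(2*a - 1)^2 < (b - 1)^3/(2*b - 1)^2"
proof -
  define u where "u = a - 1"
  define w where "w = b - 1"
  have uw: "0 \<le> u" "u < w" using assms unfolding u_def w_def by auto
  have "u^3*(2 * w+1)^2 < w^3*(2*u+1)^2"
  proof (cases "u = 0")
    case True then show ?thesis using uw by simp
  next
    case False
    then have u0: "u > 0" using uw by simp
    have l1: "u*(2 * w+1) < w * (2*u+1)" using uw by (simp add: algebra_simps)
    have "(u*(2 * w+1))^2 < (w * (2*u+1))^2" using l1 u0 uw by (intro power_strict_mono) auto
    then have "u * (u*(2 * w+1))^2 < u * (w * (2*u+1))^2" using u0 by simp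
    also have "\<dots> \<le> w * (w * (2*u+1))^2" using uw by (intro mult_right_mono) auto
    finally show ?thesis by (simp add: power2_eq_square power3_eq_cube algebra_simps)
  qed
  moreover have "2*a - 1 = 2*u+1" "2*b-1 = 2 * w+1" "a - 1 = u" "b - 1 = w" unfolding u_def w_def by auto
  moreover have "(2*u+1)^2 > 0" "(2 * w+1)^2 > 0" using uw by auto
  ultimately show ?thesis by (simp add: field_simps)
qed

lemma rho_exists_unique:
  fixes r :: real
  shows "\<exists>!x. rho_eq r x"
proof -
  define f where "f = (\<lambda>x::real. (x - 1)^3/(2*x - 1)^2)"
  define b where "b = 2 + 32*r^2"
  have b2: "b \<ge> 2" unfolding b_def by simp
  have fb: "r^2 \<le> f b"
  proof -
    have "b/2 \<le> b - 1" using b2 by simp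
    then have "(b/2)^3 \<le> (b-1)^3" using b2 by (intro power_mono) auto
    moreover have "(2*b-1)^2 \<le> (2*b)^2" using b2 by (intro power_mono) auto
    ultimately have "(b/2)^3/(2*b)^2 \<le> (b-1)^3/(2*b-1)^2" using b2
      by (intro frac_le) auto
    moreover have "(b/2)^3/(2*b)^2 = b/32" using b2 by (simp add: power2_eq_square power3_eq_cube field_simps)
    moreover have "r^2 \<le> b/32" unfolding b_def by simp
    ultimately show ?thesis unfolding f_def by simp
  qed
  have "continuous_on {1..b} f" unfolding f_def
    by (intro continuous_intros) auto
  moreover have "f 1 \<le> r^2" unfolding f_def by simp
  ultimately obtain x where x: "1 \<le> x" "x \<le> b" "f x = r^2" using IVT'[of f 1 "r^2" b] fb b2 by auto
  have ex: "rho_eq r x" unfolding rho_eq_def using x unfolding f_def by auto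
  show ?thesis
  proof (rule ex1I[of "rho_eq r", OF ex])
    fix z assume z: "rho_eq r z"
    have "z \<ge> 1" "x \<ge> 1" using rho_ge1[OF z] rho_ge1[OF ex] .
    moreover have "(z-1)^3/(2*z-1)^2 = (x-1)^3/(2*x-1)^2" using z ex unfolding rho_eq_def by simp
    ultimately show "z = x" using fr_mono[of z x] fr_mono[of x z] by (cases "z < x"; cases "x < z") auto
  qed
qed



theorem theorem1:
  fixes mu sd r :: real
  assumes "mu > 0" and "sd \<ge> 0" and "r = sd / mu"
  shows "(\<exists>!\<rho>. rho_eq r \<rho>)
    \<and> DAPX mu sd = ereal (rho_D r)
    \<and> (SUP M\<in>mv_dists mu sd.
          ratio (OPT M) (REV (rho_D r / (2 * rho_D r - 1) * mu) M)) = ereal (rho_D r)"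
proof -
  note mu = assms(1)
  have eu: "\<exists>!\<rho>. rho_eq r \<rho>" by (rule rho_exists_unique)
  define rho where "rho = rho_D r"
  have req: "rho_eq r rho" unfolding rho_def rho_D_def using theI'[OF eu] .
  have rho1: "rho \<ge> 1" using rho_ge1[OF req] .
  define D where "D = 2*rho - 1"
  have D0: "D > 0" using rho1 unfolding D_def by simp
  have "(rho - 1)^3/D^2 = r^2" using req unfolding rho_eq_def D_def by simp
  also have "r^2 = sd^2/mu^2" using assms(3) by (simp add: power_divide)
  finally have sd2: "sd^2 = mu^2*(rho-1)^3/D^2" using mu D0 by (simp add: field_simps)
  define p where "p = rho/D*mu"
  have p0: "p > 0" unfolding p_def using rho1 D0 mu by simp
  define S where "S = (\<lambda>p. SUP M\<in>mv_dists mu sd. ratio (OPT M) (REV p M))"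
  have AB: "S p \<le> ereal rho \<and> (\<forall>p'. p' \<ge> 0 \<longrightarrow> ereal rho \<le> S p')"
  proof (cases "sd = 0")
    case True
    then have "(rho - 1)^3 = 0" using sd2 mu D0 by simp
    then have r1: "rho = 1" by simp
    then have pmu: "p = mu" unfolding p_def D_def by simp
    have A: "S p \<le> ereal rho"
      unfolding S_def
    proof (rule SUP_least)
      fix M assume M: "M \<in> mv_dists mu sd"
      then have M0: "M \<in> mv_dists mu 0" using True by simp
      show "ratio (OPT M) (REV p M) \<le> ereal rho"
      proof -
        have e: "REV mu M = mu" using zero_sd(2)[OF M0 _ mu, of 0] by simp
        have le: "\<And>t. t \<ge> 0 \<Longrightarrow> REV t M \<le> 1 * REV mu M" using zero_sd(1)[OF M0 _ mu] by simp
        show ?thesis unfolding pmu r1 using upper_ratio[OF _ le] e mu by (simp add: one_ereal_def)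
      qed
    qed
    have mem: "twopt 1 mu mu \<in> mv_dists mu sd" using True mu by (intro twopt_mv) auto
    have B: "ereal rho \<le> S p'" if "p' \<ge> 0" for p'
      unfolding S_def r1 using ratio_ge1[OF that, of "twopt 1 mu mu"]
      by (intro SUP_upper2[OF mem]) (simp add: one_ereal_def)
    show ?thesis using A B by auto
  next
    case False
    then have sd0: "sd > 0" using assms(2) by simp
    have r1: "rho > 1"
    proof (rule ccontr)
      assume "\<not> rho > 1"
      then have "rho = 1" using rho1 by simp
      then show False using sd2 sd0 by simp
    qed
    have DD: "D = 2*rho - 1" by (simp add: D_def)
    have A: "S p \<le> ereal rho"
      unfolding S_def
    proof (rule SUP_least)
      fix M assume M: "M \<in> mv_dists mu sd"
      have c1: "sd^2 + (mu - rho * p)^2 = (1 - 1/rho) * (rho * p - p)^2"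
        unfolding sd2 p_def using alg1[OF mu r1 DD] .
      have c2: "sd^2 + (mu - (p + rho * p)/2)^2 = ((rho * p - p)/2)^2"
        unfolding sd2 p_def using alg2[OF mu r1 DD] .
      note U = upper_abstract[OF M p0 r1 refl c1 c2]
      have "measure M {p..} > 0" using U(1) r1 by (smt (verit) divide_pos_pos)
      then have pos: "REV p M > 0" unfolding REV_def using p0 by simp
      show "ratio (OPT M) (REV p M) \<le> ereal rho"
        by (rule upper_ratio[OF pos U(2)])
    qed
    obtain M0 where M0: "M0 \<in> mv_dists mu sd"
      using lower_core[OF mu sd0 r1 DD sd2 zero_less_one, of 0] r1 by auto
    have B: "ereal rho \<le> S p'" if p': "p' \<ge> 0" for p'
    proof (cases "p' = 0")
      case True
      have "ratio (OPT M0) (REV p' M0) = \<infinity>" unfolding ratio_def REV_def True by simp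
      then show ?thesis unfolding S_def by (intro SUP_upper2[OF M0]) simp
    next
      case False
      then have pp: "p' > 0" using p' by simp
      show ?thesis
      proof (rule dense_le)
        fix x assume x: "x < ereal rho"
        show "x \<le> S p'"
        proof (cases x)
          case (real y)
          then have "y < rho" using x by simp
          then obtain M where "M \<in> mv_dists mu sd" "ereal y \<le> ratio (OPT M) (REV p' M)"
            using lower_core[OF mu sd0 r1 DD sd2 pp] by blast
          then show ?thesis unfolding S_def real by (intro SUP_upper2)
        qed (use x in auto)
      qed
    qed
    show ?thesis using A B by auto
  qed
  have p00: "p \<ge> 0" using p0 by simp
  have Sp: "S p = ereal rho" using AB p00 by (auto intro: antisym)
  have "DAPX mu sd = (INF p\<in>{0..}. S p)" unfolding DAPX_def S_def ..
  also have "\<dots> = ereal rho"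
  proof (rule antisym)
    show "(INF p\<in>{0..}. S p) \<le> ereal rho" using Sp p00 by (intro INF_lower2[of p]) auto
    show "ereal rho \<le> (INF p\<in>{0..}. S p)" using AB by (intro INF_greatest) auto
  qed
  finally have "DAPX mu sd = ereal rho" .
  moreover have "rho_D r / (2 * rho_D r - 1) * mu = p" unfolding p_def D_def rho_def ..
  ultimately show ?thesis using eu Sp unfolding S_def rho_def by simp
qed

end
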